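(* For all $m\ge2$ and $n\ge1$, the Hilbert tensor $\mathcal{H}\in\mathbb{S}_{m,n}$ is strongly completely positive.
   Context: The Hilbert tensor has entries $h_{i_1\ldots i_m}=\frac{1}{i_1+\dots+i_m-m+1}$, $i_j\in[n]$. A tensor $\mathcal{A}\in\mathbb{S}_{m,n}$ is strongly completely positive if $\mathcal{A}=\sum_{k=1}^r(u^{(k)})^m$ with $u^{(k)}\in\mathbb{R}^n_+$ and $\mathrm{span}\{u^{(1)},\dots,u^{(r)}\}=\mathbb{R}^n$, where $(u^m)_{i_1\ldots i_m}=u_{i_1}\cdots u_{i_m}$. *)

theory Defs
  imports "HOL-Analysis.Analysis"
begin

text \<open>Tensors of order m and dimension n are modelled as real-valued functions on
  index lists; only lists of length m with entries in {1..n} are relevant.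
  Vectors in R^n are functions nat => real, only the coordinates 1..n being relevant.\<close>

definition tensor_index_set :: "nat \<Rightarrow> nat \<Rightarrow> nat list set" where
  "tensor_index_set m n = {is. length is = m \<and> set is \<subseteq> {1..n}}"

definition hilbert_tensor :: "nat \<Rightarrow> nat list \<Rightarrow> real" where
  "hilbert_tensor m is = 1 / (real (sum_list is) - real m + 1)"

definition rank_one_power :: "(nat \<Rightarrow> real) \<Rightarrow> nat list \<Rightarrow> real" where
  "rank_one_power u is = (\<Prod>j<length is. u (is ! j))"

text \<open>The vectors u 0, ..., u (r-1) (viewed in R^n, i.e. on coordinates 1..n) span R^n:
  every x in R^n is a real linear combination of them. (The other inclusion of
  span = R^n is automatic.)\<close>
definition spans_Rn :: "nat \<Rightarrow> nat \<Rightarrow> (nat \<Rightarrow> nat \<Rightarrow> real) \<Rightarrow> bool" where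
  "spans_Rn n r u \<longleftrightarrow>
     (\<forall>x::nat \<Rightarrow> real. \<exists>c::nat \<Rightarrow> real. \<forall>i\<in>{1..n}. x i = (\<Sum>k<r. c k * u k i))"

definition strongly_completely_positive ::
    "nat \<Rightarrow> nat \<Rightarrow> (nat list \<Rightarrow> real) \<Rightarrow> bool" where
  "strongly_completely_positive m n A \<longleftrightarrow>
     (\<exists>r::nat. \<exists>u::nat \<Rightarrow> nat \<Rightarrow> real.
        (\<forall>k<r. \<forall>i\<in>{1..n}. u k i \<ge> 0) \<and>
        (\<forall>is\<in>tensor_index_set m n. A is = (\<Sum>k<r. rank_one_power (u k) is)) \<and>
        spans_Rn n r u)"

end

theory Submission
  imports Defs "HOL-Computational_Algebra.Polynomial"
begin


definition I :: "real poly \<Rightarrow> real" where "I p = integral {0..1} (poly p)"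

lemma I_integrable: "(poly p) integrable_on {0..1::real}"
  by (intro integrable_continuous_interval continuous_intros)

lemma I_add: "I (p + q) = I p + I q"
proof -
  have "poly (p + q) = (\<lambda>x. poly p x + poly q x)" by (rule ext) simp
  then show ?thesis unfolding I_def by (simp add: integral_add I_integrable)
qed

lemma I_smult: "I (smult c p) = c * I p"
proof -
  have "poly (smult c p) = (\<lambda>x. c * poly p x)" by (rule ext) simp
  then show ?thesis unfolding I_def by simp
qed

lemma I_zero: "I 0 = 0"
proof -
  have "poly 0 = (\<lambda>x::real. 0)" by (rule ext) simp
  then show ?thesis by (simp add: I_def)
qed

lemma I_sum: "I (\<Sum>k\<in>A. f k) = (\<Sum>k\<in>A. I (f k))"
  by (induction A rule: infinite_finite_induct) (auto simp: I_add I_zero)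

lemma I_diff: "I (p - q) = I p - I q"
proof -
  have "poly (p - q) = (\<lambda>x. poly p x - poly q x)" by (rule ext) simp
  then show ?thesis unfolding I_def by (simp add: integral_diff I_integrable)
qed

lemma I_pderiv: "I (pderiv h) = poly h 1 - poly h 0"
proof -
  have "((poly (pderiv h)) has_integral (poly h 1 - poly h 0)) {0..1}"
    by (rule fundamental_theorem_of_calculus)
       (auto intro!: DERIV_subset[OF poly_DERIV] simp: has_real_derivative_iff_has_vector_derivative[symmetric])
  then show ?thesis unfolding I_def by (rule integral_unique)
qed

lemma I_monom: "I (monom 1 s) = 1 / (real s + 1)"
proof -
  have "pderiv (monom (1/(real s+1)) (Suc s)) = monom 1 s"
    by (simp add: pderiv_monom)
  then have "I (monom 1 s) = I (pderiv (monom (1/(real s+1)) (Suc s)))" by simp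
  also have "\<dots> = 1/(real s + 1)" by (simp add: I_pderiv poly_monom)
  finally show ?thesis .
qed

lemma I_nonneg: "(\<And>x. 0 \<le> x \<Longrightarrow> x \<le> 1 \<Longrightarrow> 0 \<le> poly p x) \<Longrightarrow> 0 \<le> I p"
  unfolding I_def by (rule integral_nonneg[OF I_integrable]) auto

lemma I_pos:
  assumes "\<And>x. 0 \<le> poly p x" "0 < y" "y < 1" "poly p y \<noteq> 0"
  shows "0 < I p"
proof -
  have "0 \<le> I p" using assms by (intro I_nonneg) auto
  moreover have "I p \<noteq> 0"
  proof
    assume h: "I p = 0"
    have "poly p y = 0"
    proof (rule has_integral_0_cbox_imp_0[of 0 1 "poly p" y])
      show "continuous_on (cbox 0 1) (poly p)" by (intro continuous_intros)
      show "(poly p has_integral 0) (cbox 0 1)"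
        using h I_integrable[of p] unfolding I_def cbox_interval
        by (metis integrable_integral)
      show "box 0 (1::real) \<noteq> {}" by simp
      show "y \<in> cbox 0 1" using assms by simp
    qed (use assms in auto)
    then show False using assms by simp
  qed
  ultimately show ?thesis by simp
qed



lemma dvd_pderiv_pow:
  fixes r p :: "real poly"
  assumes "r ^ Suc j dvd p" shows "r ^ j dvd pderiv p"
proof -
  obtain s where p: "p = r ^ Suc j * s" using assms by (auto elim: dvdE)
  have "pderiv p = r ^ j * (r * pderiv s + s * smult (of_nat (Suc j)) (pderiv r))"
    unfolding p pderiv_mult pderiv_power_Suc by (simp add: algebra_simps)
  then show ?thesis by simp
qed

lemma dvd_pderiv_iter:
  fixes r p :: "real poly"
  assumes "r ^ d dvd p" "k \<le> d" shows "r ^ (d - k) dvd (pderiv ^^ k) p"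
  using assms(2)
proof (induction k)
  case 0 then show ?case using assms(1) by simp
next
  case (Suc k)
  then have "r ^ Suc (d - Suc k) dvd (pderiv ^^ k) p"
    by (metis Suc.IH Suc_diff_Suc Suc_leD Suc_le_lessD)
  then show ?case by (simp add: dvd_pderiv_pow)
qed

definition fpol :: "nat \<Rightarrow> real poly" where "fpol d = [:0,1,-1:] ^ d"
definition Dp :: "nat \<Rightarrow> nat \<Rightarrow> real poly" where "Dp d k = (pderiv ^^ k) (fpol d)"

lemma Dp_Suc: "Dp d (Suc k) = pderiv (Dp d k)" by (simp add: Dp_def)

lemma Dp_vanish:
  assumes "k < d" shows "poly (Dp d k) 0 = 0" "poly (Dp d k) 1 = 0"
proof -
  have e0: "[:0,1,-1:] = [:-0, 1::real:] * [:1,-1:]" by simp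
  have e1: "[:0,1,-1:] = [:-1, 1::real:] * [:0,-1:]" by simp
  have "[:-0,1::real:] ^ d dvd fpol d" unfolding fpol_def e0 power_mult_distrib by simp
  then have "[:-0,1::real:] ^ (d - k) dvd Dp d k" unfolding Dp_def using assms
    by (intro dvd_pderiv_iter) auto
  then have "[:-0,1::real:] dvd Dp d k" using assms
    by (metis dvd_power dvd_trans zero_less_diff)
  then show "poly (Dp d k) 0 = 0" by (simp add: poly_eq_0_iff_dvd)
  have "[:-1,1::real:] ^ d dvd fpol d" unfolding fpol_def e1 power_mult_distrib by simp
  then have "[:-1,1::real:] ^ (d - k) dvd Dp d k" unfolding Dp_def using assms
    by (intro dvd_pderiv_iter) auto
  then have "[:-1,1::real:] dvd Dp d k" using assms
    by (metis dvd_power dvd_trans zero_less_diff)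
  then show "poly (Dp d k) 1 = 0" by (simp add: poly_eq_0_iff_dvd)
qed

lemma degree_Dp: "degree (Dp d k) = 2 * d - k"
proof (induction k)
  case 0
  have "degree ([:0,1,-1:] :: real poly) = 2" by simp
  then show ?case by (simp add: Dp_def fpol_def degree_power_eq)
next
  case (Suc k) then show ?case by (simp add: Dp_Suc degree_pderiv)
qed

lemma rolle_set:
  fixes p :: "real poly"
  assumes "finite A" "A \<noteq> {}" "\<forall>x\<in>A. poly p x = 0"
  shows "\<exists>B. finite B \<and> card B = card A - 1 \<and> B \<subseteq> {Min A<..<Max A} \<and>
             (\<forall>x\<in>B. poly (pderiv p) x = 0)"
  using assms
proof (induction "card A" arbitrary: A)
  case 0 then show ?case by simp
next
  case (Suc c)
  show ?case
  proof (cases "c = 0")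
    case True then show ?thesis using Suc by (intro exI[of _ "{}"]) auto
  next
    case False
    define A' where "A' = A - {Max A}"
    have mA: "Max A \<in> A" using Suc by simp
    have cA': "c = card A'" using Suc mA unfolding A'_def by simp
    have fA': "finite A'" using Suc unfolding A'_def by simp
    have neA': "A' \<noteq> {}" using False cA' by auto
    obtain B' where B': "finite B'" "card B' = card A' - 1" "B' \<subseteq> {Min A'<..<Max A'}"
      "\<forall>x\<in>B'. poly (pderiv p) x = 0"
      using Suc.hyps(1)[OF cA' fA' neA'] Suc.prems unfolding A'_def by auto
    have mA': "Max A' \<in> A'" using fA' neA' by simp
    have mA'A: "Max A' \<in> A" "Max A' \<noteq> Max A" using mA' unfolding A'_def by auto
    have "Max A' \<le> Max A" using mA'A(1) Suc.prems(1) by (simp add: Max_ge)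
    then have lt: "Max A' < Max A" using mA'A(2) by simp
    have minA: "Min A' = Min A"
    proof -
      have mi: "Min A \<in> A" using Suc.prems by simp
      have "Min A \<le> Max A'" using mA'A(1) Suc.prems(1) by (simp add: Min_le)
      then have "Min A \<in> A'" using mi lt unfolding A'_def by auto
      then have "Min A' \<le> Min A" using fA' by (simp add: Min_le)
      moreover have "Min A' \<in> A" using fA' neA' unfolding A'_def by (metis Diff_iff Min_in)
      then have "Min A \<le> Min A'" using Suc.prems(1) by (simp add: Min_le)
      ultimately show ?thesis by simp
    qed
    obtain z where z: "Max A' < z" "z < Max A"
      "poly p (Max A) - poly p (Max A') = (Max A - Max A') * poly (pderiv p) z"
      using poly_MVT[OF lt] by blast
    have "poly p (Max A) = 0" "poly p (Max A') = 0" using Suc.prems mA mA' unfolding A'_def by auto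
    then have pz: "poly (pderiv p) z = 0" using z lt by simp
    have zB: "z \<notin> B'" using B'(3) z by auto
    have "Min A' \<le> Max A'" using fA' neA' by simp
    show ?thesis
    proof (intro exI[of _ "insert z B'"] conjI)
      show "finite (insert z B')" using B' by simp
      show "card (insert z B') = card A - 1"
        using B' zB cA' Suc.hyps(2) False by simp
      show "insert z B' \<subseteq> {Min A<..<Max A}"
        using B'(3) z minA \<open>Min A' \<le> Max A'\<close> by auto
      show "\<forall>x\<in>insert z B'. poly (pderiv p) x = 0" using B' pz by auto
    qed
  qed
qed

lemma Dp_zeros:
  assumes "k \<le> d"
  shows "\<exists>Z. finite Z \<and> card Z = k \<and> Z \<subseteq> {0<..<1} \<and> (\<forall>x\<in>Z. poly (Dp d k) x = 0)"
  using assms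
proof (induction k)
  case 0 then show ?case by (intro exI[of _ "{}"]) auto
next
  case (Suc k)
  then obtain Z where Z: "finite Z" "card Z = k" "Z \<subseteq> {0<..<1}" "\<forall>x\<in>Z. poly (Dp d k) x = 0"
    by auto
  define A where "A = insert 0 (insert 1 Z)"
  have fA: "finite A" "A \<noteq> {}" using Z unfolding A_def by auto
  have n01: "(0::real) \<notin> insert 1 Z" "(1::real) \<notin> Z" using Z(3) by auto
  have cA: "card A = k + 2" using Z n01 unfolding A_def by simp
  have mn: "Min A = 0" "Max A = 1" using Z fA unfolding A_def
    by (auto intro!: Min_eqI Max_eqI simp del: Min_insert Max_insert)
  have "\<forall>x\<in>A. poly (Dp d k) x = 0" using Z Dp_vanish[of k d] Suc.prems unfolding A_def by auto
  from rolle_set[OF fA this] obtain B where "finite B" "card B = card A - 1"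
    "B \<subseteq> {Min A<..<Max A}" "\<forall>x\<in>B. poly (pderiv (Dp d k)) x = 0" by blast
  then show ?case using cA mn by (intro exI[of _ B]) (auto simp: Dp_Suc)
qed

lemma Dp_orth:
  assumes "k \<le> d" "degree q < k" shows "I (q * Dp d k) = 0"
  using assms
proof (induction k arbitrary: q)
  case 0 then show ?case by simp
next
  case (Suc k)
  let ?g = "Dp d k"
  have "I (q * Dp d (Suc k)) = I (pderiv (q * ?g)) - I (?g * pderiv q)"
    by (simp add: Dp_Suc pderiv_mult I_add)
  also have "I (pderiv (q * ?g)) = 0"
    using Dp_vanish[of k d] Suc.prems by (simp add: I_pderiv)
  also have "I (?g * pderiv q) = 0"
  proof (cases "pderiv q = 0")
    case True then show ?thesis by (simp add: I_zero)
  next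
    case False
    then have "degree q \<noteq> 0" by (simp add: pderiv_eq_0_iff)
    then have "degree (pderiv q) < k" using Suc.prems by (simp add: degree_pderiv)
    then show ?thesis using Suc.IH[of "pderiv q"] Suc.prems by (simp add: mult.commute)
  qed
  finally show ?case by simp
qed



definition lag :: "nat \<Rightarrow> (nat \<Rightarrow> real) \<Rightarrow> nat \<Rightarrow> real poly" where
  "lag e t k = (\<Prod>j\<in>{..<e}-{k}. smult (1/(t k - t j)) [:-t j, 1:])"

lemma poly_lag: "poly (lag e t k) x = (\<Prod>j\<in>{..<e}-{k}. (x - t j) / (t k - t j))"
  unfolding lag_def poly_prod by (simp add: diff_divide_distrib)

lemma degree_lag: assumes "k < e" shows "degree (lag e t k) \<le> e - 1"
proof -
  have "degree (lag e t k) \<le> sum (degree \<circ> (\<lambda>j. smult (1/(t k - t j)) [:-t j, 1:])) ({..<e}-{k})"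
    unfolding lag_def by (rule degree_prod_sum_le) simp
  also have "\<dots> \<le> sum (\<lambda>j. 1) ({..<e}-{k})"
    by (intro sum_mono) (simp add: degree_smult_le)
  also have "\<dots> \<le> e - 1"
    using \<open>k < e\<close> by (auto simp: card_Diff_singleton)
  finally show ?thesis .
qed

lemma poly_lag_node:
  assumes "inj_on t {..<e}" "k < e" "j < e"
  shows "poly (lag e t k) (t j) = (if j = k then 1 else 0)"
proof (cases "j = k")
  case True
  have "\<forall>i\<in>{..<e}-{k}. t k - t i \<noteq> 0" using assms inj_onD[OF assms(1)] by fastforce
  then show ?thesis unfolding True poly_lag by simp
next
  case False
  then have "j \<in> {..<e}-{k}" using assms by auto
  then have "(\<Prod>i\<in>{..<e}-{k}. (t j - t i) / (t k - t i)) = 0"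
    by (intro prod_zero) auto
  then show ?thesis using False unfolding poly_lag by simp
qed

lemma interp:
  assumes inj: "inj_on t {..<e}" and dp: "degree p < e"
  shows "p = (\<Sum>k<e. smult (poly p (t k)) (lag e t k))"
proof (rule ccontr)
  define q where "q = p - (\<Sum>k<e. smult (poly p (t k)) (lag e t k))"
  assume "p \<noteq> (\<Sum>k<e. smult (poly p (t k)) (lag e t k))"
  then have q0: "q \<noteq> 0" unfolding q_def by simp
  have "degree (\<Sum>k<e. smult (poly p (t k)) (lag e t k)) \<le> e - 1"
    by (intro degree_sum_le) (use degree_lag[of _ e t] in \<open>auto intro: order_trans[OF degree_smult_le]\<close>)
  then have dq: "degree q < e" unfolding q_def using dp
    using degree_diff_le_max[of p "\<Sum>k<e. smult (poly p (t k)) (lag e t k)"] by linarith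
  have roots: "t ` {..<e} \<subseteq> {x. poly q x = 0}"
  proof
    fix x assume "x \<in> t ` {..<e}"
    then obtain j where j: "j < e" "x = t j" by auto
    have "(\<Sum>k<e. poly p (t k) * poly (lag e t k) (t j)) = (\<Sum>k<e. if k = j then poly p (t j) else 0)"
      by (intro sum.cong) (use j assms in \<open>auto simp: poly_lag_node\<close>)
    also have "\<dots> = poly p (t j)" using j by simp
    finally show "x \<in> {x. poly q x = 0}" using j unfolding q_def by (simp add: poly_sum)
  qed
  have "e = card (t ` {..<e})" using inj by (simp add: card_image)
  also have "\<dots> \<le> card {x. poly q x = 0}"
    by (intro card_mono poly_roots_finite q0 roots)
  also have "\<dots> \<le> degree q" by (rule card_poly_roots_bound[OF q0])
  finally show False using dq by simp
qed



lemma gauss: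
  assumes d1: "d \<ge> 1"
  shows "\<exists>t w. inj_on t {..<d} \<and> (\<forall>k<d. 0 < t k \<and> t k < 1 \<and> 0 < w k) \<and>
           (\<forall>p. degree p < 2*d \<longrightarrow> I p = (\<Sum>k<d. w k * poly p (t k)))"
proof -
  define P where "P = Dp d d"
  have degP: "degree P = d" unfolding P_def degree_Dp by simp
  then have P0: "P \<noteq> 0" using d1 by auto
  obtain Z where Z: "finite Z" "card Z = d" "Z \<subseteq> {0<..<1}" "\<forall>x\<in>Z. poly P x = 0"
    using Dp_zeros[of d d] unfolding P_def by auto
  define t where "t k = sorted_list_of_set Z ! k" for k
  have len: "length (sorted_list_of_set Z) = d" using Z by simp
  have inj: "inj_on t {..<d}"
    unfolding t_def using len by (intro inj_onI) (simp add: nth_eq_iff_index_eq)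
  have tZ: "t k \<in> Z" if "k < d" for k
    using that len Z(1) unfolding t_def by (metis nth_mem set_sorted_list_of_set)
  define w where "w k = I (lag d t k)" for k
  have exact: "I p = (\<Sum>k<d. w k * poly p (t k))" if dp: "degree p < 2*d" for p
  proof -
    define s where "s = p div P"
    define r where "r = p mod P"
    have pe: "p = s * P + r" unfolding s_def r_def by simp
    have dr: "degree r < d"
      using degree_mod_less[OF P0, of p] d1 degP unfolding r_def by auto
    have ds: "degree s < d"
    proof (cases "s = 0")
      case True then show ?thesis using d1 by simp
    next
      case False
      have "degree (s * P) = degree s + d" using False P0 degP by (simp add: degree_mult_eq)
      moreover have "s * P = p - r" using pe by simp
      then have "degree (s * P) < 2 * d"
        using degree_diff_le_max[of p r] dp dr by simp
      ultimately show ?thesis by simp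
    qed
    have "I (s * P) = 0" unfolding P_def by (rule Dp_orth) (use ds in auto)
    then have "I p = I r" using pe by (simp add: I_add)
    also have "r = (\<Sum>k<d. smult (poly r (t k)) (lag d t k))" by (rule interp[OF inj dr])
    then have "I r = (\<Sum>k<d. poly r (t k) * w k)"
      by (metis (no_types, lifting) I_smult I_sum sum.cong w_def)
    also have "\<dots> = (\<Sum>k<d. w k * poly p (t k))"
    proof (intro sum.cong refl)
      fix k assume "k \<in> {..<d}"
      then have "poly P (t k) = 0" using tZ Z(4) by auto
      then show "poly r (t k) * w k = w k * poly p (t k)" proof -
        have "poly p (t k) = poly s (t k) * poly P (t k) + poly r (t k)"
          by (subst pe) simp
        with \<open>poly P (t k) = 0\<close> show ?thesis by simp
      qed
    qed
    finally show ?thesis .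
  qed
  have wpos: "0 < w k" if k: "k < d" for k
  proof -
    have "degree (lag d t k ^ 2) < 2 * d"
      using degree_power_le[of "lag d t k" 2] degree_lag[OF k, of t] d1 by linarith
    then have "I (lag d t k ^ 2) = (\<Sum>j<d. w j * (poly (lag d t k) (t j))^2)"
      using exact by simp
    also have "\<dots> = (\<Sum>j<d. if j = k then w k else 0)"
      by (intro sum.cong refl) (use k inj in \<open>auto simp: poly_lag_node\<close>)
    also have "\<dots> = w k" using k by simp
    finally have "w k = I (lag d t k ^ 2)" by simp
    also have "\<dots> > 0"
      by (rule I_pos[of _ "t k"]) (use tZ[OF k] Z(3) k inj in \<open>auto simp: poly_lag_node\<close>)
    finally show ?thesis .
  qed
  have tt: "\<forall>k<d. 0 < t k \<and> t k < 1 \<and> 0 < w k"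
    using wpos tZ Z(3) by fastforce
  show ?thesis using inj tt exact by blast
qed



lemma rank_one_geom:
  assumes "length is = m" "m > 0" "0 \<le> w"
  shows "rank_one_power (\<lambda>i. root m w * t ^ (i - 1)) is = w * t ^ (\<Sum>j<m. is ! j - 1)"
proof -
  have "rank_one_power (\<lambda>i. root m w * t ^ (i - 1)) is = (\<Prod>j<m. root m w * t ^ (is ! j - 1))"
    unfolding rank_one_power_def using assms by simp
  also have "\<dots> = root m w ^ m * (\<Prod>j<m. t ^ (is ! j - 1))"
    by (simp add: prod.distrib)
  also have "\<dots> = w * t ^ (\<Sum>j<m. is ! j - 1)"
    using assms by (simp add: power_sum)
  finally show ?thesis .
qed

definition phi :: "nat \<Rightarrow> (nat \<Rightarrow> real) \<Rightarrow> real poly \<Rightarrow> real" where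
  "phi n x p = (\<Sum>i<n. coeff p i * x (Suc i))"

lemma phi_lin: "phi n x (\<Sum>k\<in>A. smult (a k) (q k)) = (\<Sum>k\<in>A. a k * phi n x (q k))"
  unfolding phi_def coeff_sum by (simp add: sum_distrib_left sum_distrib_right sum.swap[of _ A] mult.assoc)

lemma phi_monom: assumes "i < n" shows "phi n x (monom 1 i) = x (Suc i)"
proof -
  have "phi n x (monom 1 i) = (\<Sum>ia<n. if ia = i then x (Suc ia) else 0)"
    unfolding phi_def by (intro sum.cong) auto
  then show ?thesis using assms by simp
qed

theorem mainTheorem19:
  fixes m n :: nat
  assumes "m \<ge> 2" and "n \<ge> 1"
  shows "strongly_completely_positive m n (hilbert_tensor m)"
proof -
  define N where "N = m * (n - 1)"
  define d where "d = N + 1"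
  have d1: "d \<ge> 1" unfolding d_def by simp
  have "1 * (n - 1) \<le> m * (n - 1)" using assms by (intro mult_le_mono1) simp
  then have nd: "n \<le> d" unfolding d_def N_def using assms(2) by linarith
  obtain t w where inj: "inj_on t {..<d}" and tw: "\<forall>k<d. 0 < t k \<and> t k < 1 \<and> 0 < w k"
    and exact: "\<forall>p. degree p < 2*d \<longrightarrow> I p = (\<Sum>k<d. w k * poly p (t k))"
    using gauss[OF d1] by blast
  have m0: "m > 0" using assms by simp
  define u where "u k i = root m (w k) * t k ^ (i - 1)" for k i
  show ?thesis unfolding strongly_completely_positive_def
  proof (intro exI[of _ d] exI[of _ u] conjI)
    show "\<forall>k<d. \<forall>i\<in>{1..n}. 0 \<le> u k i"
      using tw unfolding u_def by (auto intro!: mult_nonneg_nonneg real_root_ge_zero)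
    show "\<forall>is\<in>tensor_index_set m n. hilbert_tensor m is = (\<Sum>k<d. rank_one_power (u k) is)"
    proof
      fix "is" assume "is \<in> tensor_index_set m n"
      then have len: "length is = m" and rng: "set is \<subseteq> {1..n}"
        unfolding tensor_index_set_def by auto
      have rng': "1 \<le> is ! j \<and> is ! j \<le> n" if "j < m" for j
      proof -
        have "is ! j \<in> set is" using that len by simp
        then show ?thesis using rng by auto
      qed
      define S where "S = (\<Sum>j<m. is ! j - 1)"
      have "S \<le> (\<Sum>j<m. n - 1)" unfolding S_def
        by (intro sum_mono) (use rng' in \<open>force intro: diff_le_mono\<close>)
      then have SN: "S \<le> N" unfolding N_def by simp
      have rS: "real S = real (sum_list is) - real m"
      proof -
        have "real S = (\<Sum>j<m. real (is ! j) - 1)"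
          unfolding S_def of_nat_sum by (intro sum.cong refl) (use rng' in \<open>auto simp: of_nat_diff\<close>)
        also have "\<dots> = real (sum_list is) - real m"
          using len by (simp add: sum_list_sum_nth sum_subtractf atLeast0LessThan)
        finally show ?thesis .
      qed
      have "(\<Sum>k<d. rank_one_power (u k) is) = (\<Sum>k<d. w k * t k ^ S)"
        unfolding u_def S_def
      proof (intro sum.cong refl)
        fix k assume "k \<in> {..<d}"
        then have "0 \<le> w k" using tw by (simp add: less_imp_le)
        from rank_one_geom[OF len m0 this, of "t k"]
        show "rank_one_power (\<lambda>i. root m (w k) * t k ^ (i - 1)) is = w k * t k ^ (\<Sum>j<m. is ! j - 1)" .
      qed
      also have "\<dots> = (\<Sum>k<d. w k * poly (monom 1 S) (t k))" by (simp add: poly_monom)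
      also have "\<dots> = I (monom 1 S)"
        using exact SN unfolding d_def by (simp add: degree_monom_eq)
      also have "\<dots> = 1 / (real S + 1)" by (rule I_monom)
      also have "\<dots> = hilbert_tensor m is" unfolding hilbert_tensor_def rS by simp
      finally show "hilbert_tensor m is = (\<Sum>k<d. rank_one_power (u k) is)" by simp
    qed
    show "spans_Rn n d u" unfolding spans_Rn_def
    proof
      fix x :: "nat \<Rightarrow> real"
      define c where "c k = (if k < n then phi n x (lag n t k) / root m (w k) else 0)" for k
      have injn: "inj_on t {..<n}" using inj nd by (auto intro: inj_on_subset)
      have "x i = (\<Sum>k<d. c k * u k i)" if i: "i \<in> {1..n}" for i
      proof -
        have "(\<Sum>k<d. c k * u k i) = (\<Sum>k<n. c k * u k i)"
          by (rule sum.mono_neutral_right) (use nd in \<open>auto simp: c_def\<close>)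
        also have "\<dots> = (\<Sum>k<n. t k ^ (i - 1) * phi n x (lag n t k))"
        proof (intro sum.cong refl)
          fix k assume "k \<in> {..<n}"
          then have "k < d" using nd by simp
          then have "w k \<noteq> 0" using tw by force
          then have "root m (w k) \<noteq> 0" using m0 by simp
          then show "c k * u k i = t k ^ (i - 1) * phi n x (lag n t k)"
            using \<open>k \<in> {..<n}\<close> unfolding c_def u_def by simp
        qed
        also have "\<dots> = phi n x (\<Sum>k<n. smult (t k ^ (i - 1)) (lag n t k))"
          by (simp add: phi_lin)
        also have "(\<Sum>k<n. smult (t k ^ (i - 1)) (lag n t k)) = monom 1 (i - 1)"
        proof -
          have "degree (monom (1::real) (i - 1)) < n" using i by (auto simp: degree_monom_eq)
          from interp[OF injn this] show ?thesis by (simp add: poly_monom)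
        qed
        also have "phi n x (monom 1 (i - 1)) = x i"
        proof -
          have "i - 1 < n" "Suc (i - 1) = i" using i by auto
          then show ?thesis using phi_monom[of "i - 1" n x] by simp
        qed
        finally show ?thesis by simp
      qed
      then show "\<exists>c. \<forall>i\<in>{1..n}. x i = (\<Sum>k<d. c k * u k i)" by blast
    qed
  qed
qed


end
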